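(* Let $H$ be a finite simple graph with vertex set $V$. Then $H$ can be obtained from the complete graph on $V$ through a (finite, possibly empty) sequence of erasures if and only if $H$ is a connected chordal graph.
   Context: All graphs are finite, undirected, simple. A graph is chordal if every induced cycle has length three. A facet edge of $G$ is an edge $xy$ such that $\{x,y\}$ is a maximal clique of $G$. An edge of $G$ is exposed if it is contained in a unique maximal clique of $G$ and it is not a facet edge. For graphs $G,H$ on the same vertex set $V$, $H$ is obtained from $G$ through an erasure if $G$ contains an exposed edge $e$ with $H=G-e$ (delete the edge, keep all vertices). *)

theory Defs
  imports Main
begin

definition simple_graph :: "'a set \<Rightarrow> 'a set set \<Rightarrow> bool" where
  "simple_graph V E \<longleftrightarrow> (\<forall>e\<in>E. \<exists>x y. x \<in> V \<and> y \<in> V \<and> x \<noteq> y \<and> e = {x, y})"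

definition complete_graph :: "'a set \<Rightarrow> 'a set set" where
  "complete_graph V = {{x, y} | x y. x \<in> V \<and> y \<in> V \<and> x \<noteq> y}"

definition adj :: "'a set set \<Rightarrow> 'a \<Rightarrow> 'a \<Rightarrow> bool" where
  "adj E x y \<longleftrightarrow> {x, y} \<in> E"

definition is_clique :: "'a set \<Rightarrow> 'a set set \<Rightarrow> 'a set \<Rightarrow> bool" where
  "is_clique V E C \<longleftrightarrow> C \<subseteq> V \<and> (\<forall>x\<in>C. \<forall>y\<in>C. x \<noteq> y \<longrightarrow> adj E x y)"

definition maximal_clique :: "'a set \<Rightarrow> 'a set set \<Rightarrow> 'a set \<Rightarrow> bool" where
  "maximal_clique V E C \<longleftrightarrow> is_clique V E C \<and> (\<forall>D. is_clique V E D \<and> C \<subseteq> D \<longrightarrow> D = C)"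

definition facet_edge :: "'a set \<Rightarrow> 'a set set \<Rightarrow> 'a set \<Rightarrow> bool" where
  "facet_edge V E e \<longleftrightarrow> e \<in> E \<and> maximal_clique V E e"

definition exposed_edge :: "'a set \<Rightarrow> 'a set set \<Rightarrow> 'a set \<Rightarrow> bool" where
  "exposed_edge V E e \<longleftrightarrow> e \<in> E \<and> (\<exists>!C. maximal_clique V E C \<and> e \<subseteq> C) \<and> \<not> facet_edge V E e"

definition erasure :: "'a set \<Rightarrow> 'a set set \<Rightarrow> 'a set set \<Rightarrow> bool" where
  "erasure V G H \<longleftrightarrow> (\<exists>e. exposed_edge V G e \<and> H = G - {e})"

definition induced_cycle :: "'a set \<Rightarrow> 'a set set \<Rightarrow> 'a list \<Rightarrow> bool" where
  "induced_cycle V E xs \<longleftrightarrow> length xs \<ge> 3 \<and> distinct xs \<and> set xs \<subseteq> V \<and>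
     (\<forall>i<length xs. \<forall>j<length xs. i \<noteq> j \<longrightarrow>
        (adj E (xs ! i) (xs ! j) \<longleftrightarrow>
          (j = (i + 1) mod length xs \<or> i = (j + 1) mod length xs)))"

definition chordal :: "'a set \<Rightarrow> 'a set set \<Rightarrow> bool" where
  "chordal V E \<longleftrightarrow> (\<forall>xs. induced_cycle V E xs \<longrightarrow> length xs = 3)"

definition connected_graph :: "'a set \<Rightarrow> 'a set set \<Rightarrow> bool" where
  "connected_graph V E \<longleftrightarrow>
     (\<forall>x\<in>V. \<forall>y\<in>V. (\<lambda>u v. u \<in> V \<and> v \<in> V \<and> adj E u v)\<^sup>*\<^sup>* x y)"

end

theory Submission
  imports Defs
begin

lemma adj_sym: "adj E a b = adj E b a"
  by (simp add: adj_def insert_commute)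

lemma adj_complete: "H \<subseteq> complete_graph V \<Longrightarrow> adj H a b \<Longrightarrow> a \<in> V \<and> b \<in> V \<and> a \<noteq> b"
  unfolding adj_def complete_graph_def
  by (auto simp: doubleton_eq_iff)

definition ipath :: "'a set set \<Rightarrow> 'a list \<Rightarrow> bool" where
  "ipath E ps \<longleftrightarrow> distinct ps \<and> (\<forall>i<length ps. \<forall>j<length ps. i \<noteq> j \<longrightarrow>
      (adj E (ps ! i) (ps ! j) \<longleftrightarrow> (j = Suc i \<or> i = Suc j)))"

lemma suc_mod: "i < m \<Longrightarrow> Suc i mod m = (if Suc i = m then 0 else Suc i)"
  by auto

lemma m1: "i < n \<Longrightarrow> j < n \<Longrightarrow> (Suc j = Suc (Suc i) mod Suc n) \<longleftrightarrow> (j = Suc i)"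
  by (cases "Suc i = n") auto

lemma m2: "i < n \<Longrightarrow> (0 = Suc (Suc i) mod Suc n) \<longleftrightarrow> Suc i = n"
  by (cases "Suc i = n") auto

lemma m3: "0 < n \<Longrightarrow> Suc 0 mod Suc n = Suc 0"
  by auto

lemma cycle_char:
  "induced_cycle V E (x # ps) \<longleftrightarrow> (length ps \<ge> 2 \<and> x \<in> V \<and> set ps \<subseteq> V \<and> x \<notin> set ps \<and> ipath E ps \<and>
     (\<forall>i<length ps. adj E x (ps ! i) \<longleftrightarrow> (i = 0 \<or> i = length ps - 1)))"
proof
  assume c: "induced_cycle V E (x # ps)"
  let ?n = "length ps"
  have L: "?n \<ge> 2" and D: "distinct (x#ps)" and S: "set (x#ps) \<subseteq> V"
    using c by (auto simp: induced_cycle_def)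
  have A: "\<And>i j. i < Suc ?n \<Longrightarrow> j < Suc ?n \<Longrightarrow> i \<noteq> j \<Longrightarrow>
      adj E ((x#ps)!i) ((x#ps)!j) \<longleftrightarrow> (j = Suc i mod Suc ?n \<or> i = Suc j mod Suc ?n)"
    using c unfolding induced_cycle_def by auto
  have P: "ipath E ps"
    unfolding ipath_def
  proof (intro conjI allI impI)
    show "distinct ps" using D by simp
    fix i j assume "i < ?n" "j < ?n" "i \<noteq> j"
    then have "adj E ((x#ps)!Suc i) ((x#ps)!Suc j) \<longleftrightarrow> (Suc j = Suc (Suc i) mod Suc ?n \<or> Suc i = Suc (Suc j) mod Suc ?n)"
      using A[of "Suc i" "Suc j"] by auto
    then show "adj E (ps ! i) (ps ! j) \<longleftrightarrow> (j = Suc i \<or> i = Suc j)"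
      using \<open>i < ?n\<close> \<open>j < ?n\<close> by (simp add: m1)
  qed
  have X: "\<forall>i<?n. adj E x (ps ! i) \<longleftrightarrow> (i = 0 \<or> i = ?n - 1)"
  proof (intro allI impI)
    fix i assume "i < ?n"
    then have "adj E ((x#ps)!0) ((x#ps)!Suc i) \<longleftrightarrow> (Suc i = Suc 0 mod Suc ?n \<or> 0 = Suc (Suc i) mod Suc ?n)"
      using A[of 0 "Suc i"] by auto
    moreover have "Suc 0 mod Suc ?n = Suc 0" using L by (cases ps) auto
    moreover have "(0 = Suc (Suc i) mod Suc ?n) \<longleftrightarrow> Suc i = ?n" using m2 \<open>i < ?n\<close> by blast
    ultimately show "adj E x (ps ! i) \<longleftrightarrow> (i = 0 \<or> i = ?n - 1)"
      using \<open>i < ?n\<close> L by auto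
  qed
  show "length ps \<ge> 2 \<and> x \<in> V \<and> set ps \<subseteq> V \<and> x \<notin> set ps \<and> ipath E ps \<and>
     (\<forall>i<length ps. adj E x (ps ! i) \<longleftrightarrow> (i = 0 \<or> i = length ps - 1))"
    using L D S P X by auto
next
  assume R: "length ps \<ge> 2 \<and> x \<in> V \<and> set ps \<subseteq> V \<and> x \<notin> set ps \<and> ipath E ps \<and>
     (\<forall>i<length ps. adj E x (ps ! i) \<longleftrightarrow> (i = 0 \<or> i = length ps - 1))"
  let ?n = "length ps"
  have P: "\<And>i j. i < ?n \<Longrightarrow> j < ?n \<Longrightarrow> i \<noteq> j \<Longrightarrow> adj E (ps ! i) (ps ! j) \<longleftrightarrow> (j = Suc i \<or> i = Suc j)"
    using R unfolding ipath_def by auto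
  have X: "\<And>i. i < ?n \<Longrightarrow> adj E x (ps ! i) \<longleftrightarrow> (i = 0 \<or> i = ?n - 1)" using R by auto
  show "induced_cycle V E (x # ps)"
    unfolding induced_cycle_def
  proof (intro conjI allI impI)
    show "3 \<le> length (x # ps)" using R by simp
    show "distinct (x # ps)" using R by (simp add: ipath_def)
    show "set (x # ps) \<subseteq> V" using R by simp
    fix i j assume i: "i < length (x # ps)" and j: "j < length (x # ps)" and ij: "i \<noteq> j"
    show "adj E ((x # ps) ! i) ((x # ps) ! j) = (j = (i + 1) mod length (x # ps) \<or> i = (j + 1) mod length (x # ps))"
    proof (cases i)
      case 0
      then obtain j' where "j = Suc j'" using ij by (cases j) auto
      have jn: "j' < ?n" using j \<open>j = Suc j'\<close> by simp
      have e1: "Suc 0 mod Suc ?n = Suc 0" using R by (cases ps) auto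
      have e2: "(0 = Suc (Suc j') mod Suc ?n) \<longleftrightarrow> Suc j' = ?n" using m2 jn by blast
      show ?thesis using 0 X[OF jn] e1 e2 \<open>j = Suc j'\<close> jn by auto
    next
      case (Suc i')
      show ?thesis
      proof (cases j)
        case 0
        have jn: "i' < ?n" using i \<open>i = Suc i'\<close> by simp
        have e1: "Suc 0 mod Suc ?n = Suc 0" using R by (cases ps) auto
        have e2: "(0 = Suc (Suc i') mod Suc ?n) \<longleftrightarrow> Suc i' = ?n" using m2 jn by blast
        show ?thesis using 0 X[OF jn] e1 e2 \<open>i = Suc i'\<close> jn by (auto simp: adj_sym)
      next
        case (Suc j')
        then show ?thesis using \<open>i = Suc i'\<close> P[of i' j'] i j ij by (simp add: m1)
      qed
    qed
  qed
qed


lemma modcancel: "(k + j) mod n = (k + m) mod (n::nat) \<longleftrightarrow> j mod n = m mod n"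
  by (simp add: nat_mod_eq_iff)

lemma cycle_rotate:
  assumes c: "induced_cycle V E xs"
  shows "induced_cycle V E (rotate k xs)"
proof -
  let ?n = "length xs"
  let ?ys = "rotate k xs"
  have n: "?n \<ge> 3" using c by (simp add: induced_cycle_def)
  have A: "\<And>a b. a < ?n \<Longrightarrow> b < ?n \<Longrightarrow> a \<noteq> b \<Longrightarrow>
      adj E (xs ! a) (xs ! b) \<longleftrightarrow> (b = (a + 1) mod ?n \<or> a = (b + 1) mod ?n)"
    using c unfolding induced_cycle_def by auto
  have Y: "\<And>i. i < ?n \<Longrightarrow> ?ys ! i = xs ! ((k + i) mod ?n)"
    by (simp add: nth_rotate)
  show ?thesis
    unfolding induced_cycle_def
  proof (intro conjI allI impI)
    show "3 \<le> length ?ys" using n by simp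
    show "distinct ?ys" using c by (simp add: induced_cycle_def)
    show "set ?ys \<subseteq> V" using c by (simp add: induced_cycle_def)
    fix i j assume i: "i < length ?ys" and j: "j < length ?ys" and ij: "i \<noteq> j"
    have i': "i < ?n" and j': "j < ?n" using i j by auto
    define a where "a = (k + i) mod ?n"
    define b where "b = (k + j) mod ?n"
    have a: "a < ?n" and b: "b < ?n" using n by (auto simp: a_def b_def intro!: mod_less_divisor)
    have ab: "a \<noteq> b" using ij i' j' modcancel[of k i ?n j] by (auto simp: a_def b_def)
    have e1: "(b = (a + 1) mod ?n) \<longleftrightarrow> (j = (i + 1) mod ?n)"
    proof -
      have "(a + 1) mod ?n = (k + (i + 1)) mod ?n" by (simp add: a_def mod_Suc_eq)
      then have "(b = (a + 1) mod ?n) \<longleftrightarrow> j mod ?n = (i + 1) mod ?n"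
        using modcancel[of k j ?n "i+1"] by (simp add: b_def)
      then show ?thesis using j' by simp
    qed
    have e2: "(a = (b + 1) mod ?n) \<longleftrightarrow> (i = (j + 1) mod ?n)"
    proof -
      have "(b + 1) mod ?n = (k + (j + 1)) mod ?n" by (simp add: b_def mod_Suc_eq)
      then have "(a = (b + 1) mod ?n) \<longleftrightarrow> i mod ?n = (j + 1) mod ?n"
        using modcancel[of k i ?n "j+1"] by (simp add: a_def)
      then show ?thesis using i' by simp
    qed
    show "adj E (?ys ! i) (?ys ! j) = (j = (i + 1) mod length ?ys \<or> i = (j + 1) mod length ?ys)"
      using A[OF a b ab] e1 e2 Y[OF i'] Y[OF j'] by (simp add: a_def b_def)
  qed
qed

lemma cycle_at:
  assumes c: "induced_cycle V E xs" and x: "x \<in> set xs"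
  shows "\<exists>ps. induced_cycle V E (x # ps) \<and> length ps = length xs - 1 \<and> set ps \<subseteq> set xs"
proof -
  obtain k where k: "k < length xs" "xs ! k = x" using x by (auto simp: in_set_conv_nth)
  have c2: "induced_cycle V E (rotate k xs)" using cycle_rotate[OF c] .
  have ne: "rotate k xs \<noteq> []" using c by (auto simp: induced_cycle_def)
  have "rotate k xs ! 0 = x" using k nth_rotate[of 0 xs k] by fastforce
  then have "rotate k xs = x # tl (rotate k xs)" using ne by (cases "rotate k xs") auto
  then show ?thesis using c2
    by (metis length_rotate length_tl list.set_sel(2) ne set_rotate subsetI)
qed

lemma ipath_take: "ipath E ps \<Longrightarrow> ipath E (take m ps)"
  unfolding ipath_def by auto

lemma ipath_drop: "ipath E ps \<Longrightarrow> ipath E (drop m ps)"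
  unfolding ipath_def by auto

lemma ipath_rev: "ipath E ps \<Longrightarrow> ipath E (rev ps)"
  unfolding ipath_def by (auto simp: rev_nth)

lemma ipath3: "ipath E [a,b,c] \<longleftrightarrow> distinct [a,b,c] \<and> adj E a b \<and> adj E b c \<and> \<not> adj E a c"
  unfolding ipath_def by (auto simp: less_Suc_eq adj_sym)


lemma fan:
  assumes "chordal V E" "ipath E ps" "set ps \<subseteq> V" "c \<in> V" "c \<notin> set ps" "ps \<noteq> []"
    "adj E c (ps ! 0)" "adj E c (ps ! (length ps - 1))"
  shows "\<forall>i<length ps. adj E c (ps ! i)"
  using assms
proof (induction "length ps" arbitrary: ps rule: less_induct)
  case less
  let ?n = "length ps"
  show ?case
  proof (cases "\<exists>i. 0 < i \<and> i < ?n - 1 \<and> adj E c (ps ! i)")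
    case True
    then obtain i where i: "0 < i" "i < ?n - 1" "adj E c (ps ! i)" by blast
    let ?p1 = "take (Suc i) ps" and ?p2 = "drop i ps"
    have h1: "\<forall>k<length ?p1. adj E c (?p1 ! k)"
      apply (rule less.hyps)
      using less.prems i by (auto simp: ipath_take dest: in_set_takeD)
    have h2: "\<forall>k<length ?p2. adj E c (?p2 ! k)"
      apply (rule less.hyps)
      using less.prems i by (auto simp: ipath_drop dest: in_set_dropD)
    show ?thesis
    proof (intro allI impI)
      fix k assume k: "k < ?n"
      show "adj E c (ps ! k)"
      proof (cases "k \<le> i")
        case True
        then show ?thesis using h1[rule_format, of k] k by simp
      next
        case False
        then show ?thesis using h2[rule_format, of "k - i"] k by simp
      qed
    qed
  next
    case False
    show ?thesis
    proof (cases "?n \<le> 2")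
      case True
      show ?thesis
      proof (intro allI impI)
        fix k assume k: "k < ?n"
        then have "k = 0 \<or> k = ?n - 1" using True by auto
        then show "adj E c (ps ! k)" using less.prems by auto
      qed
    next
      case n3: False
      have "induced_cycle V E (c # ps)"
        unfolding cycle_char
      proof (intro conjI allI impI)
        show "2 \<le> length ps" using n3 by simp
        show "\<And>i. i < ?n \<Longrightarrow> adj E c (ps ! i) = (i = 0 \<or> i = ?n - 1)"
        proof -
          fix i assume "i < ?n"
          then show "adj E c (ps ! i) = (i = 0 \<or> i = ?n - 1)"
          proof (cases "i = 0 \<or> i = ?n - 1")
            case True then show ?thesis using less.prems by auto
          next
            case F: False
            then have "0 < i" "i < ?n - 1" using \<open>i < ?n\<close> by auto
            then show ?thesis using False F by auto
          qed
        qed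
      qed (use less.prems in auto)
      then have "length (c # ps) = 3" using less.prems(1) unfolding chordal_def by blast
      then show ?thesis using n3 by simp
    qed
  qed
qed


lemma finite_complete: "finite V \<Longrightarrow> finite (complete_graph V)"
proof -
  assume "finite V"
  moreover have "complete_graph V \<subseteq> Pow V" by (auto simp: complete_graph_def)
  ultimately show ?thesis by (meson finite_Pow_iff rev_finite_subset)
qed

lemma max_clique_exists:
  assumes "finite V" "is_clique V E K"
  shows "\<exists>M. maximal_clique V E M \<and> K \<subseteq> M"
proof -
  let ?P = "\<lambda>D. is_clique V E D \<and> K \<subseteq> D"
  have b: "\<forall>D. ?P D \<longrightarrow> card D < Suc (card V)"
    using assms(1) by (auto simp: is_clique_def intro: card_mono le_imp_less_Suc)
  obtain M where M: "?P M" "\<forall>D. ?P D \<longrightarrow> card D \<le> card M"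
    using Lattices_Big.ex_has_greatest_nat[of ?P K card, OF _ b] assms(2) by blast
  have "maximal_clique V E M"
    unfolding maximal_clique_def
  proof (intro conjI allI impI)
    show "is_clique V E M" using M by simp
    fix D assume D: "is_clique V E D \<and> M \<subseteq> D"
    then have "finite D" using assms(1) by (auto simp: is_clique_def intro: finite_subset)
    moreover have "card D \<le> card M" using M D by auto
    ultimately show "D = M" using D by (metis card_seteq)
  qed
  then show ?thesis using M by blast
qed

lemma rtranclp_lift:
  assumes "\<And>a b. R a b \<Longrightarrow> S\<^sup>*\<^sup>* a b" "R\<^sup>*\<^sup>* x y"
  shows "S\<^sup>*\<^sup>* x y"
  using assms(2)
proof (induction rule: rtranclp_induct)
  case base then show ?case by simp
next
  case (step y z) then show ?case using assms(1) by (meson rtranclp_trans)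
qed

lemma complete_ok: "connected_graph V (complete_graph V) \<and> chordal V (complete_graph V)"
proof
  show "connected_graph V (complete_graph V)"
    unfolding connected_graph_def
  proof (intro ballI)
    fix x y assume "x \<in> V" "y \<in> V"
    then show "(\<lambda>u v. u \<in> V \<and> v \<in> V \<and> adj (complete_graph V) u v)\<^sup>*\<^sup>* x y"
    proof (cases "x = y")
      case True then show ?thesis by simp
    next
      case False
      then have "adj (complete_graph V) x y" using \<open>x \<in> V\<close> \<open>y \<in> V\<close> by (auto simp: adj_def complete_graph_def)
      then show ?thesis using \<open>x \<in> V\<close> \<open>y \<in> V\<close> by (simp add: r_into_rtranclp)
    qed
  qed
  show "chordal V (complete_graph V)"
    unfolding chordal_def
  proof (intro allI impI)
    fix xs assume c: "induced_cycle V (complete_graph V) xs"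
    show "length xs = 3"
    proof (rule ccontr)
      assume "length xs \<noteq> 3"
      note cc = c[unfolded induced_cycle_def]
      note c1 = cc[THEN conjunct1]
      note c2 = cc[THEN conjunct2, THEN conjunct1]
      note c3 = cc[THEN conjunct2, THEN conjunct2, THEN conjunct1]
      note h = cc[THEN conjunct2, THEN conjunct2, THEN conjunct2]
      have n: "length xs \<ge> 4" using c1 \<open>length xs \<noteq> 3\<close> by linarith
      have l0: "0 < length xs" and l2: "2 < length xs" using n by auto
      have d: "xs ! 0 \<noteq> xs ! 2" using nth_eq_iff_index_eq[OF c2 l0 l2] by simp
      have v: "xs ! 0 \<in> V" "xs ! 2 \<in> V" using c3 l0 l2 nth_mem by blast+
      have a: "adj (complete_graph V) (xs ! 0) (xs ! 2)" using d v by (auto simp: adj_def complete_graph_def)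
      have m: "(0 + 1) mod length xs = 1" "(2 + 1) mod length xs = 3" using n by simp_all
      have "adj (complete_graph V) (xs ! 0) (xs ! 2) \<longleftrightarrow> (2 = (0 + 1) mod length xs \<or> 0 = (2 + 1) mod length xs)"
        using h[rule_format, OF l0 l2] by simp
      then show False using a m by simp
    qed
  qed
qed


lemma cycle_transfer:
  assumes c: "induced_cycle V E xs" and t: "\<And>a b. a \<in> set xs \<Longrightarrow> b \<in> set xs \<Longrightarrow> adj E a b \<longleftrightarrow> adj F a b"
  shows "induced_cycle V F xs"
proof -
  note cc = c[unfolded induced_cycle_def]
  show ?thesis
    unfolding induced_cycle_def
  proof (intro conjI allI impI)
    show "3 \<le> length xs" "distinct xs" "set xs \<subseteq> V" using cc by blast+
    fix i j assume i: "i < length xs" and j: "j < length xs" and ij: "i \<noteq> j"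
    have "adj E (xs ! i) (xs ! j) = (j = (i + 1) mod length xs \<or> i = (j + 1) mod length xs)"
      using cc[THEN conjunct2, THEN conjunct2, THEN conjunct2] i j ij by blast
    then show "adj F (xs ! i) (xs ! j) = (j = (i + 1) mod length xs \<or> i = (j + 1) mod length xs)"
      using t[OF nth_mem[OF i] nth_mem[OF j]] by simp
  qed
qed

lemma ipath_transfer:
  assumes c: "ipath E ps" and t: "\<And>a b. a \<in> set ps \<Longrightarrow> b \<in> set ps \<Longrightarrow> adj E a b \<longleftrightarrow> adj F a b"
  shows "ipath F ps"
  using assms unfolding ipath_def by (metis nth_mem)

lemma clique_adj: "is_clique V E C \<Longrightarrow> a \<in> C \<Longrightarrow> b \<in> C \<Longrightarrow> a \<noteq> b \<Longrightarrow> adj E a b"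
  unfolding is_clique_def by blast

lemma clique3: "x \<in> V \<Longrightarrow> y \<in> V \<Longrightarrow> a \<in> V \<Longrightarrow> adj E x y \<Longrightarrow> adj E x a \<Longrightarrow> adj E y a \<Longrightarrow> is_clique V E {x, y, a}"
  unfolding is_clique_def by (auto simp: adj_sym)

lemma erase_step:
  assumes fin: "finite V" and sub: "G \<subseteq> complete_graph V" and con: "connected_graph V G"
    and ch: "chordal V G" and er: "erasure V G H"
  shows "H \<subseteq> complete_graph V \<and> connected_graph V H \<and> chordal V H"
proof -
  obtain e where ex: "exposed_edge V G e" and H: "H = G - {e}" using er by (auto simp: erasure_def)
  have eG: "e \<in> G" using ex by (simp add: exposed_edge_def)
  then obtain x y where xy: "x \<in> V" "y \<in> V" "x \<noteq> y" "e = {x, y}" using sub by (auto simp: complete_graph_def)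
  obtain M where M: "maximal_clique V G M" "e \<subseteq> M"
    and uniq: "\<And>M'. maximal_clique V G M' \<Longrightarrow> e \<subseteq> M' \<Longrightarrow> M' = M"
    using ex unfolding exposed_edge_def by blast
  have nf: "\<not> maximal_clique V G e" using ex eG by (simp add: exposed_edge_def facet_edge_def)
  then have "M \<noteq> e" using M by auto
  then obtain z where z: "z \<in> M" "z \<noteq> x" "z \<noteq> y" using M xy by blast
  have MC: "is_clique V G M" using M by (simp add: maximal_clique_def)
  have zV: "z \<in> V" using MC z by (auto simp: is_clique_def)
  have xM: "x \<in> M" and yM: "y \<in> M" using M xy by auto
  have xz: "adj G x z" using clique_adj[OF MC xM z(1)] z by simp
  have zy: "adj G z y" using clique_adj[OF MC z(1) yM] z by simp
  have adjH: "\<And>a b. adj H a b \<longleftrightarrow> adj G a b \<and> {a, b} \<noteq> {x, y}"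
    using H xy by (auto simp: adj_def)
  have xyG: "adj G x y" using eG xy by (simp add: adj_def)
  have subH: "H \<subseteq> complete_graph V" using sub H by auto
  have conH: "connected_graph V H"
    unfolding connected_graph_def
  proof (intro ballI)
    fix u v assume "u \<in> V" "v \<in> V"
    let ?R = "\<lambda>u v. u \<in> V \<and> v \<in> V \<and> adj G u v"
    let ?S = "\<lambda>u v. u \<in> V \<and> v \<in> V \<and> adj H u v"
    have Ruv: "?R\<^sup>*\<^sup>* u v" using con \<open>u \<in> V\<close> \<open>v \<in> V\<close> by (simp add: connected_graph_def)
    have step: "?S\<^sup>*\<^sup>* a b" if "?R a b" for a b
    proof (cases "{a, b} = {x, y}")
      case False
      then show ?thesis using that adjH by (simp add: r_into_rtranclp)
    next
      case True
      have s1: "?S a z" using that True z zV xz zy adjH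
        by (auto simp: doubleton_eq_iff adj_sym)
      have s2: "?S z b" using that True z zV xz zy adjH
        by (auto simp: doubleton_eq_iff adj_sym)
      show ?thesis using r_into_rtranclp[of ?S, OF s1] r_into_rtranclp[of ?S, OF s2] by (rule rtranclp_trans)
    qed
    show "?S\<^sup>*\<^sup>* u v" using rtranclp_lift[of ?R ?S, OF step Ruv] by blast
  qed
  have chH: "chordal V H"
    unfolding chordal_def
  proof (intro allI impI)
    fix xs assume c: "induced_cycle V H xs"
    show "length xs = 3"
    proof (cases "x \<in> set xs")
      case False
      have "induced_cycle V G xs"
      proof (rule cycle_transfer[OF c])
        fix a b assume "a \<in> set xs" "b \<in> set xs"
        then have "{a, b} \<noteq> {x, y}" using False by auto
        then show "adj H a b \<longleftrightarrow> adj G a b" using adjH by simp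
      qed
      then show ?thesis using ch by (simp add: chordal_def)
    next
      case True
      show ?thesis
      proof (rule ccontr)
        assume n3: "length xs \<noteq> 3"
        have "length xs \<ge> 3" using c by (simp add: induced_cycle_def)
        obtain ps where ps: "induced_cycle V H (x # ps)" "length ps = length xs - 1"
          using cycle_at[OF c True] by blast
        let ?n = "length ps"
        have n: "?n \<ge> 3" using ps(2) n3 \<open>length xs \<ge> 3\<close> by simp
        note pc = ps(1)[unfolded cycle_char]
        have pH: "ipath H ps" and xps: "x \<notin> set ps" and psV: "set ps \<subseteq> V"
          and ax: "\<And>i. i < ?n \<Longrightarrow> adj H x (ps ! i) \<longleftrightarrow> (i = 0 \<or> i = ?n - 1)"
          using pc by blast+
        have tr: "adj H a b \<longleftrightarrow> adj G a b" if "a \<in> set ps" "b \<in> set ps" for a b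
        proof -
          have "{a, b} \<noteq> {x, y}" using that xps by auto
          then show ?thesis using adjH by simp
        qed
        have pG: "ipath G ps" using ipath_transfer[OF pH] tr by blast
        have a0: "adj G x (ps ! 0)" using ax[of 0] n adjH by (cases ps) auto
        have a1: "adj G x (ps ! (?n - 1))" using ax[of "?n - 1"] n adjH by auto
        have allx: "\<forall>i<?n. adj G x (ps ! i)"
        proof -
          have ne: "ps \<noteq> []" using n by auto
          show ?thesis using fan[OF ch pG psV xy(1) xps ne a0 a1] .
        qed
        have isy: "ps ! i = y" if "0 < i" "i < ?n - 1" for i
        proof -
          have "\<not> adj H x (ps ! i)" using ax[of i] that by auto
          moreover have "adj G x (ps ! i)" using allx that by auto
          ultimately have "{x, ps ! i} = {x, y}" using adjH by blast
          then show ?thesis using xy(3) by (auto simp: doubleton_eq_iff)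
        qed
        have dps: "distinct ps" using pH by (simp add: ipath_def)
        have n3': "?n = 3"
        proof (rule ccontr)
          assume "?n \<noteq> 3"
          then have "ps ! 1 = ps ! 2" using isy[of 1] isy[of 2] n by auto
          moreover have "ps ! 1 \<noteq> ps ! 2" using nth_eq_iff_index_eq[OF dps, of 1 2] n by simp
          ultimately show False by simp
        qed
        have y1: "ps ! 1 = y" using isy[of 1] n3' by simp
        have PH: "\<And>i j. i < ?n \<Longrightarrow> j < ?n \<Longrightarrow> i \<noteq> j \<Longrightarrow> adj H (ps ! i) (ps ! j) \<longleftrightarrow> (j = Suc i \<or> i = Suc j)"
          using pH unfolding ipath_def by blast
        let ?a = "ps ! 0" and ?b = "ps ! 2"
        have ay: "adj G ?a y" using PH[of 0 1] n3' y1 adjH by auto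
        have yb: "adj G y ?b" using PH[of 1 2] n3' y1 adjH by auto
        have nab: "\<not> adj H ?a ?b" using PH[of 0 2] n3' by simp
        have aps: "?a \<in> set ps" and bps: "?b \<in> set ps" using n3' by auto
        have nabG: "\<not> adj G ?a ?b" using nab tr[OF aps bps] by simp
        have aV: "?a \<in> V" and bV: "?b \<in> V" using psV aps bps by auto
        have xb: "adj G x ?b" using allx n3' by auto
        have xa: "adj G x ?a" using a0 .
        obtain M1 where M1: "maximal_clique V G M1" "{x, y, ?a} \<subseteq> M1"
          using max_clique_exists[OF fin clique3[OF xy(1) xy(2) aV xyG xa]] ay by (auto simp: adj_sym)
        obtain M2 where M2: "maximal_clique V G M2" "{x, y, ?b} \<subseteq> M2"
          using max_clique_exists[OF fin clique3[OF xy(1) xy(2) bV xyG xb]] yb by (auto simp: adj_sym)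
        have "M1 = M" using uniq[OF M1(1)] M1(2) xy(4) by auto
        moreover have "M2 = M" using uniq[OF M2(1)] M2(2) xy(4) by auto
        ultimately have "?a \<in> M" "?b \<in> M" using M1 M2 by auto
        moreover have "?a \<noteq> ?b" using nth_eq_iff_index_eq[OF dps, of 0 2] n3' by simp
        ultimately have "adj G ?a ?b" using clique_adj[OF MC] by blast
        then show False using nabG by simp
      qed
    qed
  qed
  show ?thesis using subH conH chH by blast
qed


lemma ipath_cons:
  assumes "ipath E ps" "a \<notin> set ps" "\<And>i. i < length ps \<Longrightarrow> adj E a (ps ! i) \<longleftrightarrow> i = 0"
  shows "ipath E (a # ps)"
proof -
  have P: "\<And>i j. i < length ps \<Longrightarrow> j < length ps \<Longrightarrow> i \<noteq> j \<Longrightarrow> adj E (ps ! i) (ps ! j) \<longleftrightarrow> (j = Suc i \<or> i = Suc j)"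
    using assms(1) unfolding ipath_def by blast
  show ?thesis
    unfolding ipath_def
  proof (intro conjI allI impI)
    show "distinct (a # ps)" using assms(1,2) by (simp add: ipath_def)
    fix i j assume i: "i < length (a # ps)" and j: "j < length (a # ps)" and ij: "i \<noteq> j"
    show "adj E ((a # ps) ! i) ((a # ps) ! j) = (j = Suc i \<or> i = Suc j)"
    proof (cases i)
      case 0
      then obtain j' where "j = Suc j'" using ij by (cases j) auto
      then show ?thesis using 0 assms(3)[of j'] j by auto
    next
      case (Suc i')
      show ?thesis
      proof (cases j)
        case 0
        then show ?thesis using Suc assms(3)[of i'] i by (auto simp: adj_sym)
      next
        case (Suc j')
        then show ?thesis using \<open>i = Suc i'\<close> P[of i' j'] i j ij by simp
      qed
    qed
  qed
qed

lemma leave_set: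
  assumes "R\<^sup>*\<^sup>* a b" "a \<in> S" "b \<notin> S"
  shows "\<exists>w z. R w z \<and> w \<in> S \<and> z \<notin> S"
  using assms
proof (induction rule: rtranclp_induct)
  case base then show ?case by simp
next
  case (step y z)
  show ?case
  proof (cases "y \<in> S")
    case True then show ?thesis using step by blast
  next
    case False then show ?thesis using step by blast
  qed
qed


definition nbr :: "'a set \<Rightarrow> 'a set set \<Rightarrow> 'a \<Rightarrow> 'a set" where
  "nbr V H a = {c \<in> V. adj H a c}"

lemma exists_pair:
  assumes sub: "H \<subseteq> complete_graph V" and con: "connected_graph V H" and ne: "H \<noteq> complete_graph V"
  shows "\<exists>u z. u \<in> V \<and> z \<in> V \<and> u \<noteq> z \<and> \<not> adj H u z \<and> nbr V H u \<inter> nbr V H z \<noteq> {}"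
proof -
  obtain e where e: "e \<in> complete_graph V" "e \<notin> H" using sub ne by blast
  then obtain u v where uv: "u \<in> V" "v \<in> V" "u \<noteq> v" "e = {u, v}" by (auto simp: complete_graph_def)
  have nuv: "\<not> adj H u v" using e uv by (simp add: adj_def)
  let ?R = "\<lambda>u v. u \<in> V \<and> v \<in> V \<and> adj H u v"
  let ?S = "{w. w = u \<or> adj H u w}"
  have "?R\<^sup>*\<^sup>* u v" using con uv by (simp add: connected_graph_def)
  moreover have "u \<in> ?S" by simp
  moreover have "v \<notin> ?S" using nuv uv by simp
  ultimately obtain w z where wz: "?R w z" "w \<in> ?S" "z \<notin> ?S" using leave_set[of ?R u v ?S] by blast
  have "w \<noteq> u" using wz by auto
  then have uw: "adj H u w" using wz by auto
  have zu: "z \<noteq> u" "\<not> adj H u z" using wz by auto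
  have "w \<in> nbr V H u \<inter> nbr V H z" using uw wz by (auto simp: nbr_def adj_sym)
  then show ?thesis using zu wz uv by blast
qed

lemma common_clique:
  assumes sub: "H \<subseteq> complete_graph V" and ch: "chordal V H" and xV: "x \<in> V" and yV: "y \<in> V"
    and nxy: "\<not> adj H x y" and c: "c \<in> nbr V H x \<inter> nbr V H y" and d: "d \<in> nbr V H x \<inter> nbr V H y"
    and cd: "c \<noteq> d" and xy: "x \<noteq> y"
  shows "adj H c d"
proof (rule ccontr)
  assume ncd: "\<not> adj H c d"
  have xc: "adj H x c" and yc: "adj H y c" and xd: "adj H x d" and yd: "adj H y d" and cV: "c \<in> V" and dV: "d \<in> V"
    using c d by (auto simp: nbr_def)
  have "x \<noteq> c" "x \<noteq> d" "y \<noteq> c" "y \<noteq> d" "x \<noteq> y"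
    using adj_complete[OF sub xc] adj_complete[OF sub xd] adj_complete[OF sub yc] adj_complete[OF sub yd] nxy xc xy
    by auto
  then have "induced_cycle V H (x # [c, y, d])"
    unfolding cycle_char using xV yV cV dV cd ncd xc yc xd yd nxy
    by (auto simp: ipath3 adj_sym less_Suc_eq)
  then have "length (x # [c, y, d]) = 3" using ch unfolding chordal_def by blast
  then show False by simp
qed


lemma chordal_add:
  assumes fin: "finite V" and sub: "H \<subseteq> complete_graph V" and ch: "chordal V H"
    and xV: "x \<in> V" and yV: "y \<in> V" and xy: "x \<noteq> y" and nxy: "\<not> adj H x y"
    and Cne: "nbr V H x \<inter> nbr V H y \<noteq> {}"
    and maxi: "\<And>u v. u \<in> V \<Longrightarrow> v \<in> V \<Longrightarrow> u \<noteq> v \<Longrightarrow> \<not> adj H u v \<Longrightarrow> nbr V H u \<inter> nbr V H v \<noteq> {}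
        \<Longrightarrow> card (nbr V H u \<inter> nbr V H v) \<le> card (nbr V H x \<inter> nbr V H y)"
  shows "chordal V (insert {x, y} H)"
  unfolding chordal_def
proof (intro allI impI)
  let ?G = "insert {x, y} H"
  let ?C = "nbr V H x \<inter> nbr V H y"
  have adjG: "\<And>a b. adj ?G a b \<longleftrightarrow> adj H a b \<or> {a, b} = {x, y}" by (auto simp: adj_def)
  have xyG: "adj ?G x y" by (simp add: adj_def)
  fix xs assume c: "induced_cycle V ?G xs"
  show "length xs = 3"
  proof (cases "x \<in> set xs")
    case False
    have "induced_cycle V H xs"
    proof (rule cycle_transfer[OF c])
      fix a b assume "a \<in> set xs" "b \<in> set xs"
      then have "{a, b} \<noteq> {x, y}" using False by auto
      then show "adj ?G a b \<longleftrightarrow> adj H a b" using adjG by simp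
    qed
    then show ?thesis using ch by (simp add: chordal_def)
  next
    case True
    show ?thesis
    proof (rule ccontr)
      assume n3: "length xs \<noteq> 3"
      have "length xs \<ge> 3" using c by (simp add: induced_cycle_def)
      obtain ps where ps: "induced_cycle V ?G (x # ps)" "length ps = length xs - 1"
        using cycle_at[OF c True] by blast
      let ?n = "length ps"
      have n: "?n \<ge> 3" using ps(2) n3 \<open>length xs \<ge> 3\<close> by simp
      have psne [simp]: "ps \<noteq> []" using n by auto
      note pc = ps(1)[unfolded cycle_char]
      have pG: "ipath ?G ps" and xps: "x \<notin> set ps" and psV: "set ps \<subseteq> V"
        and ax: "\<And>i. i < ?n \<Longrightarrow> adj ?G x (ps ! i) \<longleftrightarrow> (i = 0 \<or> i = ?n - 1)"
        using pc by blast+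
      have tr: "adj ?G a b \<longleftrightarrow> adj H a b" if "a \<in> set ps" "b \<in> set ps" for a b
      proof -
        have "{a, b} \<noteq> {x, y}" using that xps by auto
        then show ?thesis using adjG by simp
      qed
      have pH: "ipath H ps" using ipath_transfer[OF pG] tr by blast
      show False
      proof (cases "y \<in> set ps")
        case False
        have "induced_cycle V H (x # ps)"
          unfolding cycle_char
        proof (intro conjI allI impI)
          show "2 \<le> ?n" using n by simp
          fix i assume i: "i < ?n"
          have "ps ! i \<noteq> y" using False i nth_mem by metis
          then have "{x, ps ! i} \<noteq> {x, y}" by (auto simp: doubleton_eq_iff)
          then show "adj H x (ps ! i) = (i = 0 \<or> i = ?n - 1)" using ax[OF i] adjG by simp
        qed (use xV psV xps pH in auto)
        then have "length (x # ps) = 3" using ch unfolding chordal_def by blast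
        then show False using n by simp
      next
        case True
        then obtain k where k: "k < ?n" "ps ! k = y" by (auto simp: in_set_conv_nth)
        have "k = 0 \<or> k = ?n - 1" using ax[OF k(1)] k(2) xyG by simp
        then obtain qs where qs: "ipath H qs" "length qs = ?n" "set qs = set ps" "qs ! (?n - 1) = y"
          "\<And>i. i < ?n \<Longrightarrow> adj ?G x (qs ! i) \<longleftrightarrow> (i = 0 \<or> i = ?n - 1)"
        proof
          assume "k = ?n - 1"
          then show ?thesis using that[of ps] pH k ax by auto
        next
          assume k0: "k = 0"
          have "ipath H (rev ps)" using pH by (rule ipath_rev)
          moreover have "rev ps ! (?n - 1) = y" using k k0 n by (simp add: rev_nth)
          moreover have "adj ?G x (rev ps ! i) \<longleftrightarrow> (i = 0 \<or> i = ?n - 1)" if "i < ?n" for i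
            using ax[of "?n - 1 - i"] that by (auto simp: rev_nth)
          ultimately show ?thesis using that[of "rev ps"] by auto
        qed
        have dqs: "distinct qs" using qs(1) by (simp add: ipath_def)
        have QH: "\<And>i j. i < ?n \<Longrightarrow> j < ?n \<Longrightarrow> i \<noteq> j \<Longrightarrow> adj H (qs ! i) (qs ! j) \<longleftrightarrow> (j = Suc i \<or> i = Suc j)"
          using qs(1,2) unfolding ipath_def by auto
        have xqs: "x \<notin> set qs" using qs(3) xps by simp
        have qsV: "set qs \<subseteq> V" using qs(3) psV by simp
        have q0y: "qs ! 0 \<noteq> y"
        proof -
          have "0 < length qs" "?n - 1 < length qs" using qs(2) n by auto
          then have "(qs ! 0 = qs ! (?n - 1)) = (0 = ?n - 1)" using nth_eq_iff_index_eq[OF dqs] by blast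
          then show ?thesis using qs(4) n by simp
        qed
        have axH: "adj H x (qs ! i) \<longleftrightarrow> i = 0" if i: "i < ?n" for i
        proof (cases "i = 0")
          case True
          have "adj ?G x (qs ! 0)" using qs(5)[of 0] n by simp
          moreover have "{x, qs ! 0} \<noteq> {x, y}" using q0y by (auto simp: doubleton_eq_iff)
          ultimately show ?thesis using True adjG by simp
        next
          case False
          show ?thesis
          proof (cases "i = ?n - 1")
            case True
            then show ?thesis using qs(4) nxy False by simp
          next
            case F2: False
            then show ?thesis using qs(5)[OF i] False adjG by auto
          qed
        qed
        let ?q = "x # qs"
        have qH: "ipath H ?q" using ipath_cons[OF qs(1) xqs] axH qs(2) by auto
        have q0: "qs ! 0 \<in> V" "qs ! 1 \<in> V" using qsV qs(2) n by auto
        have q01: "adj H (qs ! 1) (qs ! 0)" using QH[of 1 0] n by simp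
        have xq1: "\<not> adj H x (qs ! 1)" using axH[of 1] n by simp
        have q0y': "\<not> adj H y (qs ! 0)" using QH[of 0 "?n - 1"] qs(4) n by (simp add: adj_sym)
        have fanC: "adj H (qs ! 1) c" if cC: "c \<in> ?C" for c
        proof -
          have xc: "adj H x c" and yc: "adj H y c" and cV: "c \<in> V" using cC by (auto simp: nbr_def)
          have cx: "c \<noteq> x" using adj_complete[OF sub xc] by auto
          have cqs: "c \<notin> set qs"
          proof
            assume "c \<in> set qs"
            then obtain i where i: "i < ?n" "qs ! i = c" using qs(2) by (auto simp: in_set_conv_nth)
            then have "i = 0" using axH[OF i(1)] xc by simp
            then show False using i q0y' yc by simp
          qed
          have "\<forall>i<length ?q. adj H c (?q ! i)"
          proof (rule fan[OF ch qH])
            show "set ?q \<subseteq> V" using xV qsV by simp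
            show "c \<in> V" by fact
            show "c \<notin> set ?q" using cx cqs by simp
            show "?q \<noteq> []" by simp
            show "adj H c (?q ! 0)" using xc by (simp add: adj_sym)
            have "?q ! (length ?q - 1) = y" using qs(2,4) n by (cases "?n") auto
            then show "adj H c (?q ! (length ?q - 1))" using yc by (simp add: adj_sym)
          qed
          moreover have "2 < length ?q" using qs(2) n by simp
          ultimately have "adj H c (?q ! 2)" by blast
          then show ?thesis using n by (simp add: adj_sym numeral_2_eq_2)
        qed
        have x1: "x \<noteq> qs ! 1"
        proof -
          have "1 < length qs" using qs(2) n by simp
          then have "qs ! 1 \<in> set qs" by (rule nth_mem)
          then show ?thesis using xqs by auto
        qed
        have sub1: "insert (qs ! 0) ?C \<subseteq> nbr V H x \<inter> nbr V H (qs ! 1)"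
        proof
          fix w assume "w \<in> insert (qs ! 0) ?C"
          then show "w \<in> nbr V H x \<inter> nbr V H (qs ! 1)"
          proof
            assume "w = qs ! 0"
            then show ?thesis using q0 q01 axH[of 0] n by (auto simp: nbr_def)
          next
            assume "w \<in> ?C"
            then show ?thesis using fanC[of w] by (auto simp: nbr_def)
          qed
        qed
        have finN: "finite (nbr V H x \<inter> nbr V H (qs ! 1))" using fin by (auto simp: nbr_def)
        have q0C: "qs ! 0 \<notin> ?C" using q0y' by (auto simp: nbr_def)
        have finC: "finite ?C" using fin by (auto simp: nbr_def)
        have "card (insert (qs ! 0) ?C) \<le> card (nbr V H x \<inter> nbr V H (qs ! 1))"
          using card_mono[OF finN sub1] .
        moreover have "card (insert (qs ! 0) ?C) = Suc (card ?C)" using finC q0C by simp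
        moreover have "card (nbr V H x \<inter> nbr V H (qs ! 1)) \<le> card ?C"
          using maxi[OF xV q0(2) x1 xq1] sub1 by blast
        ultimately show False by simp
      qed
    qed
  qed
qed


lemma exposed_add:
  assumes sub: "H \<subseteq> complete_graph V"
    and xV: "x \<in> V" and yV: "y \<in> V" and xy: "x \<noteq> y" and nxy: "\<not> adj H x y"
    and Cne: "nbr V H x \<inter> nbr V H y \<noteq> {}"
    and Ccl: "\<And>c d. c \<in> nbr V H x \<inter> nbr V H y \<Longrightarrow> d \<in> nbr V H x \<inter> nbr V H y \<Longrightarrow> c \<noteq> d \<Longrightarrow> adj H c d"
  shows "exposed_edge V (insert {x, y} H) {x, y}"
proof -
  let ?G = "insert {x, y} H"
  let ?C = "nbr V H x \<inter> nbr V H y"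
  let ?M = "{x, y} \<union> ?C"
  have adjG: "\<And>a b. adj ?G a b \<longleftrightarrow> adj H a b \<or> {a, b} = {x, y}" by (auto simp: adj_def)
  have Cx: "\<And>c. c \<in> ?C \<Longrightarrow> adj H x c \<and> adj H y c \<and> c \<in> V \<and> c \<noteq> x \<and> c \<noteq> y"
  proof -
    fix c assume "c \<in> ?C"
    then have "adj H x c" "adj H y c" "c \<in> V" by (auto simp: nbr_def)
    then show "adj H x c \<and> adj H y c \<and> c \<in> V \<and> c \<noteq> x \<and> c \<noteq> y"
      using adj_complete[OF sub \<open>adj H x c\<close>] adj_complete[OF sub \<open>adj H y c\<close>] by auto
  qed
  have sub0: "D \<subseteq> ?M" if D: "is_clique V ?G D" "{x, y} \<subseteq> D" for D
  proof
    fix d assume dD: "d \<in> D"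
    show "d \<in> ?M"
    proof (cases "d = x \<or> d = y")
      case True then show ?thesis by auto
    next
      case False
      have dV: "d \<in> V" using D(1) dD by (auto simp: is_clique_def)
      have "adj ?G x d" "adj ?G y d" using D False dD clique_adj by (metis insert_subset)+
      moreover have "{x, d} \<noteq> {x, y}" "{y, d} \<noteq> {x, y}" using False xy by (auto simp: doubleton_eq_iff)
      ultimately have "adj H x d" "adj H y d" using adjG by auto
      then show ?thesis using dV by (auto simp: nbr_def)
    qed
  qed
  have cl0: "is_clique V ?G ?M"
    unfolding is_clique_def
  proof (intro conjI ballI impI)
    show "?M \<subseteq> V" using xV yV Cx by auto
    fix a b assume a: "a \<in> ?M" and b: "b \<in> ?M" and ab: "a \<noteq> b"
    show "adj ?G a b"
    proof (cases "a \<in> ?C \<and> b \<in> ?C")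
      case True then show ?thesis using Ccl ab adjG by blast
    next
      case False
      then show ?thesis using a b ab Cx adjG by (auto simp: adj_sym)
    qed
  qed
  have max0: "maximal_clique V ?G ?M"
    unfolding maximal_clique_def using cl0 sub0 by blast
  have uniq: "\<exists>!M. maximal_clique V ?G M \<and> {x, y} \<subseteq> M"
  proof (rule ex1I[of _ ?M])
    show "maximal_clique V ?G ?M \<and> {x, y} \<subseteq> ?M" using max0 by auto
    fix M assume M: "maximal_clique V ?G M \<and> {x, y} \<subseteq> M"
    then have "M \<subseteq> ?M" using sub0 by (simp add: maximal_clique_def)
    then show "M = ?M" using M cl0 unfolding maximal_clique_def by blast
  qed
  have nf: "\<not> facet_edge V ?G {x, y}"
  proof
    assume "facet_edge V ?G {x, y}"
    then have "maximal_clique V ?G {x, y}" by (simp add: facet_edge_def)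
    then have "?M = {x, y}" using cl0 by (simp add: maximal_clique_def)
    moreover obtain c where "c \<in> ?C" using Cne by blast
    ultimately show False using Cx by blast
  qed
  show ?thesis unfolding exposed_edge_def using uniq nf by simp
qed

lemma backward:
  assumes fin: "finite V"
  shows "H \<subseteq> complete_graph V \<Longrightarrow> connected_graph V H \<Longrightarrow> chordal V H \<Longrightarrow> (erasure V)\<^sup>*\<^sup>* (complete_graph V) H"
proof (induction "card (complete_graph V - H)" arbitrary: H rule: less_induct)
  case less
  note sub = less.prems(1) and con = less.prems(2) and ch = less.prems(3)
  show ?case
  proof (cases "H = complete_graph V")
    case True then show ?thesis by simp
  next
    case ne: False
    let ?P = "\<lambda>p. fst p \<in> V \<and> snd p \<in> V \<and> fst p \<noteq> snd p \<and> \<not> adj H (fst p) (snd p) \<and> nbr V H (fst p) \<inter> nbr V H (snd p) \<noteq> {}"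
    let ?f = "\<lambda>p. card (nbr V H (fst p) \<inter> nbr V H (snd p))"
    obtain u z where uz: "?P (u, z)" using exists_pair[OF sub con ne] by auto
    have bnd: "\<forall>p. ?P p \<longrightarrow> ?f p < Suc (card V)"
    proof (intro allI impI)
      fix p
      have "nbr V H (fst p) \<inter> nbr V H (snd p) \<subseteq> V" by (auto simp: nbr_def)
      then have "?f p \<le> card V" using fin by (simp add: card_mono)
      then show "?f p < Suc (card V)" by simp
    qed
    obtain p where p: "?P p" and pmax: "\<forall>q. ?P q \<longrightarrow> ?f q \<le> ?f p"
      using Lattices_Big.ex_has_greatest_nat[of ?P "(u, z)" ?f, OF uz bnd] by blast
    obtain x y where pxy: "p = (x, y)" by (cases p)
    have xV: "x \<in> V" and yV: "y \<in> V" and xy: "x \<noteq> y" and nxy: "\<not> adj H x y"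
      and Cne: "nbr V H x \<inter> nbr V H y \<noteq> {}" using p pxy by auto
    have maxi: "card (nbr V H a \<inter> nbr V H b) \<le> card (nbr V H x \<inter> nbr V H y)"
      if "a \<in> V" "b \<in> V" "a \<noteq> b" "\<not> adj H a b" "nbr V H a \<inter> nbr V H b \<noteq> {}" for a b
      using pmax[rule_format, of "(a, b)"] that pxy by auto
    let ?G = "insert {x, y} H"
    have chG: "chordal V ?G" using chordal_add[OF fin sub ch xV yV xy nxy Cne maxi] by blast
    have Ccl: "\<And>c d. c \<in> nbr V H x \<inter> nbr V H y \<Longrightarrow> d \<in> nbr V H x \<inter> nbr V H y \<Longrightarrow> c \<noteq> d \<Longrightarrow> adj H c d"
      using common_clique[OF sub ch xV yV nxy] xy by blast
    have exG: "exposed_edge V ?G {x, y}" using exposed_add[OF sub xV yV xy nxy Cne Ccl] .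
    have eH: "{x, y} \<notin> H" using nxy by (simp add: adj_def)
    have eC: "{x, y} \<in> complete_graph V" using xV yV xy by (auto simp: complete_graph_def)
    have subG: "?G \<subseteq> complete_graph V" using sub eC by simp
    have conG: "connected_graph V ?G"
      unfolding connected_graph_def
    proof (intro ballI)
      fix a b assume "a \<in> V" "b \<in> V"
      then have "(\<lambda>u v. u \<in> V \<and> v \<in> V \<and> adj H u v)\<^sup>*\<^sup>* a b" using con by (simp add: connected_graph_def)
      then show "(\<lambda>u v. u \<in> V \<and> v \<in> V \<and> adj ?G u v)\<^sup>*\<^sup>* a b"
        by (rule rtranclp_mono[THEN predicate2D, rotated]) (auto simp: adj_def)
    qed
    have lt: "card (complete_graph V - ?G) < card (complete_graph V - H)"
    proof (rule psubset_card_mono)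
      show "finite (complete_graph V - H)" using finite_complete[OF fin] by simp
      show "complete_graph V - ?G \<subset> complete_graph V - H" using eH eC by auto
    qed
    have IH: "(erasure V)\<^sup>*\<^sup>* (complete_graph V) ?G" using less.hyps[OF lt subG conG chG] .
    have "erasure V ?G H" unfolding erasure_def using exG eH by auto
    then show ?thesis using IH by simp
  qed
qed

theorem theorem2p8:
  fixes V :: "'a set" and H :: "'a set set"
  assumes "finite V" and "simple_graph V H"
  shows "(erasure V)\<^sup>*\<^sup>* (complete_graph V) H \<longleftrightarrow> connected_graph V H \<and> chordal V H"
proof
  have sub: "H \<subseteq> complete_graph V" using assms(2) unfolding simple_graph_def complete_graph_def by blast
  assume "(erasure V)\<^sup>*\<^sup>* (complete_graph V) H"
  then have "H \<subseteq> complete_graph V \<and> connected_graph V H \<and> chordal V H"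
  proof (induction rule: rtranclp_induct)
    case base then show ?case using complete_ok by blast
  next
    case (step G H') then show ?case using erase_step[OF assms(1)] by blast
  qed
  then show "connected_graph V H \<and> chordal V H" by blast
next
  have sub: "H \<subseteq> complete_graph V" using assms(2) unfolding simple_graph_def complete_graph_def by blast
  assume "connected_graph V H \<and> chordal V H"
  then show "(erasure V)\<^sup>*\<^sup>* (complete_graph V) H" using backward[OF assms(1) sub] by blast
qed

end
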